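(* Let $v\equiv 1$ or $7\pmod{24}$ with $v\ge 7$, and let $n=\frac{v-1}{6}$. For all integers $i,j$ with $0\le j\le n$ and $j\le i\le n$, there exists a cyclic four-fold triple system CTS$(v,4)$ whose fine structure $(c_1,c_2,c_3,c_4)$ satisfies $(c_2,c_3,c_4)=(2n-2i,\,i-j,\,j)$.
   Context: A cyclic $\lambda$-fold triple system CTS$(v,\lambda)$ is a multiset $\mathcal B$ of 3-element subsets (blocks) of $\mathbb Z_v$ such that every 2-element subset of $\mathbb Z_v$ is contained in exactly $\lambda$ blocks (counted with multiplicity), and $\mathcal B$ is invariant under the translation $x\mapsto x+1$. Thus $\mathcal B$ is a union of translation orbits of 3-subsets with multiplicities; a base block is an orbit representative. The fine structure is $(c_1,\ldots,c_\lambda)$, where $c_i$ is the number of distinct base blocks (orbits) occurring with multiplicity exactly $i$; for $\lambda=4$, $c_1=4n-4c_4-3c_3-2c_2$. *)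

theory Defs
  imports Main "HOL-Library.Multiset"
begin

text \<open>Elements of Z_v are represented by the naturals 0..v-1; translation by k is
  x \<mapsto> (x + k) mod v.  Blocks are 3-element subsets of {0..<v}.\<close>

definition shift_block :: "nat \<Rightarrow> nat \<Rightarrow> nat set \<Rightarrow> nat set" where
  "shift_block v k b = (\<lambda>x. (x + k) mod v) ` b"

definition block_orbit :: "nat \<Rightarrow> nat set \<Rightarrow> nat set set" where
  "block_orbit v b = {shift_block v k b | k. k < v}"

definition is_CTS :: "nat \<Rightarrow> nat \<Rightarrow> nat set multiset \<Rightarrow> bool" where
  "is_CTS v lam B \<longleftrightarrow>
     (\<forall>b \<in># B. b \<subseteq> {0..<v} \<and> card b = 3) \<and>
     image_mset (shift_block v 1) B = B \<and>
     (\<forall>x \<in> {0..<v}. \<forall>y \<in> {0..<v}. x \<noteq> y \<longrightarrow>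
        size (filter_mset (\<lambda>b. {x, y} \<subseteq> b) B) = lam)"

definition fine_c :: "nat \<Rightarrow> nat set multiset \<Rightarrow> nat \<Rightarrow> nat" where
  "fine_c v B i = card {block_orbit v b | b. b \<in># B \<and> count B b = i}"

end

theory Submission
  imports Defs
begin


lemma mod2v: "(a::nat) < 2*v \<Longrightarrow> b < 2*v \<Longrightarrow> (a mod v = b mod v) \<longleftrightarrow> (a = b \<or> a = b + v \<or> a + v = b)"
proof -
  assume a: "a < 2*v" and b: "b < 2*v"
  have ma: "a mod v = (if a < v then a else a - v)"
    using a by (simp add: mod_if le_mod_geq)
  have mb: "b mod v = (if b < v then b else b - v)"
    using b by (simp add: mod_if le_mod_geq)
  show ?thesis unfolding ma mb using a b by auto
qed

lemma mod1v: "(a::nat) < 2*v \<Longrightarrow> x < v \<Longrightarrow> (a mod v = x) \<longleftrightarrow> (a = x \<or> a = x + v)"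
  using mod2v[of a v x] by simp

lemma shift_mem: "z \<in> shift_block v k b \<longleftrightarrow> (\<exists>x\<in>b. z = (x+k) mod v)"
  by (auto simp: shift_block_def)

lemma shift_sub: "0 < v \<Longrightarrow> shift_block v k b \<subseteq> {0..<v}"
  by (auto simp: shift_block_def)

lemma shift_comp: "shift_block v j (shift_block v k b) = shift_block v (j+k) b"
  unfolding shift_block_def image_image
  by (rule image_cong) (auto simp: mod_add_left_eq add.assoc add.commute[of j k])

lemma shift_mod: "shift_block v (k mod v) b = shift_block v k b"
  unfolding shift_block_def by (simp add: mod_add_right_eq)

lemma shift0: "b \<subseteq> {0..<v} \<Longrightarrow> shift_block v 0 b = b"
  unfolding shift_block_def by (auto simp: subset_iff image_iff)

lemma shiftv: "b \<subseteq> {0..<v} \<Longrightarrow> shift_block v v b = b"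
  using shift_mod[of v v b] shift0[of b v] by simp

lemma shift_inj: "inj_on (\<lambda>x. (x + k) mod v) {0..<(v::nat)}"
proof (rule inj_onI)
  fix x y assume x: "x \<in> {0..<v}" and y: "y \<in> {0..<v}" and e: "(x + k) mod v = (y + k) mod v"
  have v: "0 < v" using x by (simp add: less_imp_le_nat gr0I)
  have "(x + k mod v) mod v = (y + k mod v) mod v" using e by (simp add: mod_add_right_eq)
  moreover have "k mod v < v" using v by simp
  ultimately show "x = y" using x y mod2v[of "x + k mod v" v "y + k mod v"] by auto
qed

lemma shift_card: "b \<subseteq> {0..<v} \<Longrightarrow> card (shift_block v k b) = card b"
  unfolding shift_block_def by (rule card_image) (rule inj_on_subset[OF shift_inj])

lemma mem_shift_lin: "b \<subseteq> {0..<v} \<Longrightarrow> k < v \<Longrightarrow> x < v \<Longrightarrow>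
   x \<in> shift_block v k b \<longleftrightarrow> (\<exists>s\<in>b. s + k = x \<or> s + k = x + v)"
proof -
  assume b: "b \<subseteq> {0..<v}" and k: "k < v" and x: "x < v"
  have "\<And>s. s \<in> b \<Longrightarrow> (x = (s + k) mod v) \<longleftrightarrow> (s + k = x \<or> s + k = x + v)"
  proof -
    fix s assume "s \<in> b" then have "s < v" using b by auto
    then show "(x = (s + k) mod v) \<longleftrightarrow> (s + k = x \<or> s + k = x + v)"
      using mod1v[of "s+k" v x] k x by auto
  qed
  then show ?thesis by (auto simp: shift_mem)
qed

lemma pair_count:
  assumes b: "b \<subseteq> {0..<v}" and x: "x < v" and y: "y < v"
  shows "card {k\<in>{0..<v}. {x,y} \<subseteq> shift_block v k b} =
         card {(s,t)\<in>b\<times>b. y+s = x+t \<or> y+s = x+t+v \<or> y+s+v = x+t}"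
proof -
  let ?P = "{(s,t)\<in>b\<times>b. y+s = x+t \<or> y+s = x+t+v \<or> y+s+v = x+t}"
  let ?K = "{k\<in>{0..<v}. {x,y} \<subseteq> shift_block v k b}"
  define f where "f = (\<lambda>(s::nat,t::nat). if s \<le> x then x - s else x + v - s)"
  have bl: "\<And>s. s \<in> b \<Longrightarrow> s < v" using b by auto
  have K: "?K = {k. k < v \<and> (\<exists>s\<in>b. s + k = x \<or> s + k = x + v) \<and> (\<exists>s\<in>b. s + k = y \<or> s + k = y + v)}"
    using mem_shift_lin[OF b _ x] mem_shift_lin[OF b _ y] by auto
  have "bij_betw f ?P ?K"
  proof (rule bij_betw_imageI)
    show "inj_on f ?P"
    proof (rule inj_onI)
      fix p q assume p: "p \<in> ?P" and q: "q \<in> ?P" and e: "f p = f q"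
      obtain s t where st: "p = (s,t)" by (cases p)
      obtain s' t' where st': "q = (s',t')" by (cases q)
      have "s < v" "t < v" "s' < v" "t' < v" using p q st st' bl by auto
      then show "p = q" using p q e st st' x y unfolding f_def by (auto split: if_splits)
    qed
    show "f ` ?P = ?K"
    proof
      show "f ` ?P \<subseteq> ?K"
      proof
        fix k assume "k \<in> f ` ?P"
        then obtain s t where st: "(s,t) \<in> ?P" and kk: "k = f (s,t)" by auto
        have "s < v" "t < v" using st bl by auto
        moreover have "t + k = y \<or> t + k = y + v" "s + k = x \<or> s + k = x + v" "k < v"
          using st kk x y calculation unfolding f_def by (auto split: if_splits)
        ultimately show "k \<in> ?K" unfolding K using st by blast
      qed
      show "?K \<subseteq> f ` ?P"
      proof
        fix k assume "k \<in> ?K"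
        then obtain s t where k: "k < v" and s: "s \<in> b" "s + k = x \<or> s + k = x + v"
           and t: "t \<in> b" "t + k = y \<or> t + k = y + v" unfolding K by auto
        have "s < v" "t < v" using s t bl by auto
        then have "(s,t) \<in> ?P" "k = f (s,t)" using s t k x y unfolding f_def by auto
        then show "k \<in> f ` ?P" by blast
      qed
    qed
  qed
  then show ?thesis by (simp add: bij_betw_same_card)
qed



definition orb :: "nat \<Rightarrow> nat set \<Rightarrow> nat set multiset" where
  "orb v b = mset (map (\<lambda>k. shift_block v k b) [0..<v])"

lemma orb_mem: "z \<in># orb v b \<longleftrightarrow> (\<exists>k<v. z = shift_block v k b)"
  by (auto simp: orb_def)

lemma orb_set: "set_mset (orb v b) = block_orbit v b"
  by (auto simp: orb_def block_orbit_def)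

lemma orb_size_filter: "size (filter_mset P (orb v b)) = card {k\<in>{0..<v}. P (shift_block v k b)}"
proof -
  have "size (filter_mset P (orb v b)) = length (filter P (map (\<lambda>k. shift_block v k b) [0..<v]))"
    unfolding orb_def by (simp only: mset_filter[symmetric] size_mset)
  also have "\<dots> = length (filter (\<lambda>k. P (shift_block v k b)) [0..<v])"
    by (simp only: filter_map length_map o_def)
  also have "\<dots> = card (set (filter (\<lambda>k. P (shift_block v k b)) [0..<v]))"
    by (rule distinct_card[symmetric]) simp
  also have "set (filter (\<lambda>k. P (shift_block v k b)) [0..<v]) = {k\<in>{0..<v}. P (shift_block v k b)}"
    by auto
  finally show ?thesis .
qed

lemma orb_count: "count (orb v b) z = card {k\<in>{0..<v}. shift_block v k b = z}"
proof -
  have "count (orb v b) z = size (filter_mset (\<lambda>y. y = z) (orb v b))"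
    by (simp add: filter_eq_replicate_mset)
  then show ?thesis by (simp add: orb_size_filter)
qed

lemma orb_inv:
  assumes b: "b \<subseteq> {0..<v}" and v: "0 < v"
  shows "image_mset (shift_block v 1) (orb v b) = orb v b"
proof -
  define F where "F = (\<lambda>k. shift_block v k b)"
  have gF: "shift_block v 1 \<circ> F = F \<circ> Suc" by (rule ext) (simp add: F_def shift_comp)
  have "image_mset (shift_block v 1) (orb v b) = mset (map (shift_block v 1 \<circ> F) [0..<v])"
    unfolding orb_def F_def by (simp only: mset_map[symmetric] map_map)
  also have "\<dots> = mset (map F (map Suc [0..<v]))" by (simp only: gF map_map)
  also have "map Suc [0..<v] = [1..<v] @ [v]"
    using v by (simp add: map_Suc_upt upt_Suc_append Suc_leI)
  also have "mset (map F ([1..<v] @ [v])) = mset (F 0 # map F [1..<v])"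
    using shift0[OF b] shiftv[OF b] unfolding F_def by (simp del: mset_map mset_upt)
  also have "F 0 # map F [1..<v] = map F [0..<v]" using v by (simp add: upt_rec)
  finally show ?thesis unfolding orb_def F_def .
qed

lemma image_mset_sum': "image_mset f (sum g A) = sum (\<lambda>p. image_mset f (g p)) A"
  by (induct A rule: infinite_finite_induct) simp_all

lemma image_mset_repeat: "image_mset f (repeat_mset m M) = repeat_mset m (image_mset f M)"
  by (induct m) simp_all

lemma size_filter_sum: "size (filter_mset P (sum g A)) = sum (\<lambda>p. size (filter_mset P (g p))) A"
  by (induct A rule: infinite_finite_induct) simp_all

lemma size_filter_repeat: "size (filter_mset P (repeat_mset m M)) = m * size (filter_mset P M)"
  by (induct m) simp_all

lemma mem_sum_mset: "finite A \<Longrightarrow> z \<in># sum g A \<Longrightarrow> \<exists>p\<in>A. z \<in># g p"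
  by (induct A rule: finite_induct) auto

lemma shift_ne:
  assumes b: "b \<subseteq> {0..M}" and z: "0 \<in> b" and M: "2*M < v" and d: "0 < d" "d < v"
  shows "shift_block v d b \<noteq> b"
proof
  assume e: "shift_block v d b = b"
  have "d \<in> shift_block v d b" using z d by (auto simp: shift_mem intro!: bexI[of _ 0])
  then have dM: "d \<le> M" using e b by auto
  have "0 \<in> shift_block v d b" using e z by simp
  then obtain x where x: "x \<in> b" "0 = (x + d) mod v" by (auto simp: shift_mem)
  have "x \<le> M" using x b by auto
  then have "x + d < v" using dM M by linarith
  then show False using x d by simp
qed

lemma shifts_distinct:
  assumes b: "b \<subseteq> {0..M}" and z: "0 \<in> b" and M: "2*M < v"
    and k: "k < v" "k' < v" and e: "shift_block v k b = shift_block v k' b"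
  shows "k = k'"
proof (rule ccontr)
  assume ne: "k \<noteq> k'"
  have bv: "b \<subseteq> {0..<v}" using b M by auto
  have gen: "\<And>k k'. k < k' \<Longrightarrow> k' < v \<Longrightarrow> shift_block v k b = shift_block v k' b \<Longrightarrow> False"
  proof -
    fix k k' assume kk: "k < k'" "k' < v" and e: "shift_block v k b = shift_block v k' b"
    have "shift_block v (v - k) (shift_block v k b) = b"
      using kk shiftv[OF bv] by (simp add: shift_comp)
    moreover have "shift_block v (v - k) (shift_block v k' b) = shift_block v (k' - k) b"
    proof -
      have "shift_block v (v - k) (shift_block v k' b) = shift_block v ((v - k + k') mod v) b"
        by (simp add: shift_comp shift_mod)
      also have "(v - k + k') mod v = k' - k"
      proof -
        have e: "v - k + k' = (k' - k) + v" using kk by simp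
        show ?thesis unfolding e mod_add_self2 by (rule mod_less) (use kk in linarith)
      qed
      finally show ?thesis .
    qed
    ultimately have "shift_block v (k' - k) b = b" using e by simp
    then show False using shift_ne[OF b z M, of "k'-k"] kk by simp
  qed
  show False
  proof (cases "k < k'")
    case True then show False using gen k e by blast
  next
    case False then have "k' < k" using ne by simp
    then show False using gen k e by metis
  qed
qed

lemma orbit_shift:
  assumes b: "b \<subseteq> {0..<v}" and k: "k < v"
  shows "block_orbit v (shift_block v k b) = block_orbit v b"
proof
  show "block_orbit v (shift_block v k b) \<subseteq> block_orbit v b"
  proof
    fix z assume "z \<in> block_orbit v (shift_block v k b)"
    then obtain j where "j < v" "z = shift_block v j (shift_block v k b)" by (auto simp: block_orbit_def)
    then have "z = shift_block v ((j+k) mod v) b" by (simp add: shift_comp shift_mod)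
    then show "z \<in> block_orbit v b" using k by (auto simp: block_orbit_def)
  qed
  show "block_orbit v b \<subseteq> block_orbit v (shift_block v k b)"
  proof
    fix z assume "z \<in> block_orbit v b"
    then obtain m where m: "m < v" "z = shift_block v m b" by (auto simp: block_orbit_def)
    define j where "j = (m + v - k) mod v"
    have "(j + k) mod v = m"
    proof -
      have "(j + k) mod v = (m + v - k + k) mod v" unfolding j_def by (simp add: mod_add_left_eq)
      also have "m + v - k + k = m + v" using k by simp
      finally show ?thesis using m by simp
    qed
    moreover have "shift_block v j (shift_block v k b) = shift_block v ((j+k) mod v) b"
      by (simp add: shift_comp shift_mod)
    ultimately have "z = shift_block v j (shift_block v k b)" using m by simp
    moreover have "j < v" using k unfolding j_def by simp
    ultimately show "z \<in> block_orbit v (shift_block v k b)" by (auto simp: block_orbit_def)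
  qed
qed

lemma orbit_eq_imp:
  assumes "b2 \<subseteq> {0..<v}" "block_orbit v b1 = block_orbit v b2" "0 < v"
  shows "\<exists>k<v. b2 = shift_block v k b1"
proof -
  have "b2 \<in> block_orbit v b2" using assms shift0[of b2 v] by (auto simp: block_orbit_def intro!: exI[of _ 0])
  then have "b2 \<in> block_orbit v b1" using assms(2) by simp
  then show ?thesis by (auto simp: block_orbit_def)
qed

lemma transport: "(((x::nat) + k) mod v + d) mod v = ((x + d) mod v + k) mod v"
proof -
  have "((x + k) mod v + d) mod v = (x + k + d) mod v" by (rule mod_add_left_eq)
  moreover have "((x + d) mod v + k) mod v = (x + d + k) mod v" by (rule mod_add_left_eq)
  ultimately show ?thesis by (simp add: ac_simps)
qed

lemma transport_mem: "(x + d) mod v \<in> S \<Longrightarrow> (((x + k) mod v) + d) mod v \<in> shift_block v k S"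
  by (auto simp: shift_mem transport)



definition gd :: "nat \<Rightarrow> nat \<Rightarrow> nat \<Rightarrow> nat" where
  "gd v t d = (if t = d then 1 else 0) + (if t + d = v then 1 else 0)"

lemma tri_char:
  fixes e f t v M s u :: nat
  assumes e: "1 \<le> e" and f: "1 \<le> f" and M: "e + f \<le> M" "2*M < v"
    and t: "1 \<le> t" "t < v" and s: "s \<in> {0,e,e+f}" and u: "u \<in> {0,e,e+f}"
  shows "(t + s = u \<or> t + s = u + v) \<longleftrightarrow>
     ((s,u) = (0,e) \<and> t = e) \<or> ((s,u) = (e,e+f) \<and> t = f) \<or> ((s,u) = (0,e+f) \<and> t = e+f) \<or>
     ((s,u) = (e,0) \<and> t + e = v) \<or> ((s,u) = (e+f,e) \<and> t + f = v) \<or> ((s,u) = (e+f,0) \<and> t + (e+f) = v)"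
  using s u assms by (elim insertE; simp; arith)

lemma tri_card:
  fixes e f t v M :: nat
  assumes e: "1 \<le> e" and f: "1 \<le> f" and ef: "e \<noteq> f" and M: "e + f \<le> M" "2*M < v"
    and t: "1 \<le> t" "t < v"
  shows "card {(s,u)\<in>{0,e,e+f}\<times>{0,e,e+f}. t + s = u \<or> t + s = u + v}
         = gd v t e + gd v t f + gd v t (e+f)"
proof -
  let ?c = "e+f"
  let ?S = "{(s,u)\<in>{0,e,e+f}\<times>{0,e,e+f}. t + s = u \<or> t + s = u + v}"
  define R where "R = (\<lambda>(s,u). ((s,u) = (0,e) \<and> t = e) \<or> ((s,u) = (e,e+f) \<and> t = f) \<or> ((s,u) = (0,e+f) \<and> t = e+f) \<or>
     ((s,u) = (e,0) \<and> t + e = v) \<or> ((s,u) = (e+f,e) \<and> t + f = v) \<or> ((s,u) = (e+f,0) \<and> t + (e+f) = v))"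
  have S: "?S = {p. R p}"
  proof (rule set_eqI)
    fix p :: "nat \<times> nat"
    obtain s u where p: "p = (s,u)" by (cases p)
    show "p \<in> ?S \<longleftrightarrow> p \<in> {p. R p}"
    proof (cases "s \<in> {0,e,?c} \<and> u \<in> {0,e,?c}")
      case True
      then have "(t + s = u \<or> t + s = u + v) = R (s,u)"
        unfolding R_def using tri_char[OF e f M t, of s u] by simp
      moreover have "(s,u) \<in> ?S \<longleftrightarrow> (t + s = u \<or> t + s = u + v)" using True by (simp only: mem_Collect_eq case_prod_conv mem_Sigma_iff) simp
      ultimately show ?thesis unfolding p by simp
    next
      case False
      then have "\<not> R (s,u)" unfolding R_def by auto
      then show ?thesis unfolding p using False by auto
    qed
  qed
  have x1: "\<not> (t = e \<and> t = f)" "\<not> (t = e \<and> t = ?c)" "\<not> (t = f \<and> t = ?c)" using ef f e by auto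
  have x2: "t + e \<noteq> v \<or> t + f \<noteq> v" "t + e \<noteq> v \<or> t + ?c \<noteq> v" "t + f \<noteq> v \<or> t + ?c \<noteq> v"
    using ef f e by auto
  have x3: "\<And>d d'. d \<le> M \<Longrightarrow> d' \<le> M \<Longrightarrow> t = d \<Longrightarrow> t + d' \<noteq> v" using M by linarith
  have eM: "e \<le> M" "f \<le> M" "?c \<le> M" using M by auto
  consider (h1) "t = e" | (h2) "t = f" | (h3) "t = ?c" | (n1) "t + e = v" | (n2) "t + f = v"
    | (n3) "t + ?c = v"
    | (none) "t \<noteq> e" "t \<noteq> f" "t \<noteq> ?c" "t + e \<noteq> v" "t + f \<noteq> v" "t + ?c \<noteq> v"
    by argo
  then show ?thesis
  proof cases
    case h1
    then have a: "t \<noteq> f" "t \<noteq> ?c" "t + e \<noteq> v" "t + f \<noteq> v" "t + ?c \<noteq> v" using x1 x3[OF eM(1)] eM by auto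
    have "{p. R p} = {(0,e)}" using h1 a unfolding R_def by auto
    then show ?thesis unfolding S using h1 a by (simp add: gd_def)
  next
    case h2
    then have a: "t \<noteq> e" "t \<noteq> ?c" "t + e \<noteq> v" "t + f \<noteq> v" "t + ?c \<noteq> v" using x1 x3[OF eM(2)] eM by auto
    have "{p. R p} = {(e,?c)}" using h2 a unfolding R_def by auto
    then show ?thesis unfolding S using h2 a by (simp add: gd_def)
  next
    case h3
    then have a: "t \<noteq> e" "t \<noteq> f" "t + e \<noteq> v" "t + f \<noteq> v" "t + ?c \<noteq> v" using x1 x3[OF eM(3)] eM by auto
    have "{p. R p} = {(0,?c)}" using h3 a unfolding R_def by auto
    then show ?thesis unfolding S using h3 a by (simp add: gd_def)
  next
    case n1
    then have a: "t \<noteq> e" "t \<noteq> f" "t \<noteq> ?c" "t + f \<noteq> v" "t + ?c \<noteq> v" using x2 x3 eM by metis+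
    have "{p. R p} = {(e,0)}" using n1 a unfolding R_def by auto
    then show ?thesis unfolding S using n1 a by (simp add: gd_def)
  next
    case n2
    then have a: "t \<noteq> e" "t \<noteq> f" "t \<noteq> ?c" "t + e \<noteq> v" "t + ?c \<noteq> v" using x2 x3 eM by metis+
    have "{p. R p} = {(?c,e)}" using n2 a unfolding R_def by auto
    then show ?thesis unfolding S using n2 a by (simp add: gd_def)
  next
    case n3
    then have a: "t \<noteq> e" "t \<noteq> f" "t \<noteq> ?c" "t + e \<noteq> v" "t + f \<noteq> v" using x2 x3 eM by metis+
    have "{p. R p} = {(?c,0)}" using n3 a unfolding R_def by auto
    then show ?thesis unfolding S using n3 a by (simp add: gd_def)
  next
    case none
    have E: "{p. R p} = {}" using none unfolding R_def by auto
    show ?thesis unfolding S E using none by (simp add: gd_def)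
  qed
qed



lemma distinct_concat_disj:
  assumes d: "distinct (concat (map g [0..<n]))" and kl: "k < l" "l < n"
  shows "set (g k) \<inter> set (g l) = {}"
proof -
  have "[0..<n] = [0..<l] @ [l..<n]" using upt_add_eq_append[of 0 l "n-l"] kl by simp
  then have "distinct (concat (map g [0..<l]) @ concat (map g [l..<n]))" using d by simp
  then have "set (concat (map g [0..<l])) \<inter> set (concat (map g [l..<n])) = {}" by simp
  moreover have "set (g k) \<subseteq> set (concat (map g [0..<l]))" using kl by auto
  moreover have "set (g l) \<subseteq> set (concat (map g [l..<n]))" using kl by auto
  ultimately show ?thesis by blast
qed

lemma distinct_concat_each:
  assumes d: "distinct (concat (map g [0..<n]))" and k: "k < n"
  shows "distinct (g k)"
  using d k by (auto simp: distinct_concat_iff)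

lemma delta_lemma:
  fixes x y v s u :: nat
  assumes "x < v" "y < v" "s < v" "u < v"
  shows "(y+s = x+u \<or> y+s = x+u+v \<or> y+s+v = x+u) \<longleftrightarrow>
         ((if x < y then y - x else y + v - x) + s = u \<or> (if x < y then y - x else y + v - x) + s = u + v)"
  using assms by auto

locale fam =
  fixes n v :: nat and a b :: "nat \<Rightarrow> nat"
  assumes n1: "1 \<le> n" and vdef: "v = 6*n+1"
    and dW: "distinct (concat (map (\<lambda>k. [a k, b k, a k + b k]) [0..<n]))"
    and sW: "set (concat (map (\<lambda>k. [a k, b k, a k + b k]) [0..<n])) = {1..3*n}"
begin

lemma tri_props:
  assumes k: "k < n"
  shows "1 \<le> a k" "1 \<le> b k" "a k \<noteq> b k" "a k + b k \<le> 3*n"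
proof -
  have "a k \<in> set (concat (map (\<lambda>k. [a k, b k, a k + b k]) [0..<n]))"
    "b k \<in> set (concat (map (\<lambda>k. [a k, b k, a k + b k]) [0..<n]))"
    "a k + b k \<in> set (concat (map (\<lambda>k. [a k, b k, a k + b k]) [0..<n]))" using k by auto
  then have "{a k, b k, a k + b k} \<subseteq> {1..3*n}" unfolding sW by auto
  then show "1 \<le> a k" "1 \<le> b k" "a k + b k \<le> 3*n" by auto
  show "a k \<noteq> b k" using distinct_concat_each[OF dW k] by simp
qed

lemma tri_disj:
  assumes "k < n" "l < n" "k \<noteq> l"
  shows "{a k, b k, a k + b k} \<inter> {a l, b l, a l + b l} = {}"
proof (cases "k < l")
  case True
  then show ?thesis using distinct_concat_disj[OF dW True assms(2)] by simp
next
  case False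
  then have lk: "l < k" using assms by simp
  show ?thesis using distinct_concat_disj[OF dW lk assms(1)] by auto
qed

definition bb :: "nat \<times> bool \<Rightarrow> nat set" where
  "bb p = (case p of (k, ob) \<Rightarrow> if ob then {0, a k, a k + b k} else {0, b k, b k + a k})"

definition ee :: "nat \<times> bool \<Rightarrow> nat" where
  "ee p = (case p of (k, ob) \<Rightarrow> if ob then a k else b k)"

definition ff :: "nat \<times> bool \<Rightarrow> nat" where
  "ff p = (case p of (k, ob) \<Rightarrow> if ob then b k else a k)"

definition PP :: "(nat \<times> bool) set" where
  "PP = {0..<n} \<times> UNIV"

lemma finPP: "finite PP" by (simp add: PP_def)

lemma bb_eq: "bb p = {0, ee p, ee p + ff p}"
  by (cases p) (auto simp: bb_def ee_def ff_def)

lemma ef_props: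
  assumes "p \<in> PP"
  shows "1 \<le> ee p" "1 \<le> ff p" "ee p \<noteq> ff p" "ee p + ff p \<le> 3*n"
    "ee p + ff p = a (fst p) + b (fst p)"
  using assms tri_props[of "fst p"] by (cases p; auto simp: PP_def ee_def ff_def)+

lemma M3: "2 * (3*n) < v" using vdef by simp

lemma vpos: "0 < v" using vdef by simp

lemma bb_sub: "p \<in> PP \<Longrightarrow> bb p \<subseteq> {0..3*n}"
  using ef_props[of p] by (auto simp: bb_eq)

lemma bb_subv: "p \<in> PP \<Longrightarrow> bb p \<subseteq> {0..<v}"
  using bb_sub[of p] vdef by auto

lemma bb0: "0 \<in> bb p" by (simp add: bb_eq)

lemma bb_card: "p \<in> PP \<Longrightarrow> card (bb p) = 3"
  using ef_props(1-3)[of p] by (simp add: bb_eq)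

lemma orb_count_bb:
  assumes p: "p \<in> PP"
  shows "count (orb v (bb p)) z = (if z \<in> block_orbit v (bb p) then 1 else 0)"
proof (cases "z \<in> block_orbit v (bb p)")
  case True
  then obtain k0 where k0: "k0 < v" "z = shift_block v k0 (bb p)" by (auto simp: block_orbit_def)
  have "{k\<in>{0..<v}. shift_block v k (bb p) = z} = {k0}"
    using shifts_distinct[OF bb_sub[OF p] bb0 M3] k0 by auto
  then show ?thesis using True by (simp add: orb_count)
next
  case False
  then have "{k\<in>{0..<v}. shift_block v k (bb p) = z} = {}" by (auto simp: block_orbit_def)
  then show ?thesis using False by (simp add: orb_count)
qed

definition dl :: "nat \<Rightarrow> nat \<Rightarrow> nat" where
  "dl x y = (if x < y then y - x else y + v - x)"

lemma orb_pairs_bb: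
  assumes p: "p \<in> PP" and x: "x < v" and y: "y < v" and xy: "x \<noteq> y"
  shows "size (filter_mset (\<lambda>z. {x,y} \<subseteq> z) (orb v (bb p)))
       = gd v (dl x y) (a (fst p)) + gd v (dl x y) (b (fst p)) + gd v (dl x y) (a (fst p) + b (fst p))"
proof -
  let ?e = "ee p" and ?f = "ff p"
  have "size (filter_mset (\<lambda>z. {x,y} \<subseteq> z) (orb v (bb p)))
     = card {(s,t)\<in>bb p \<times> bb p. y+s = x+t \<or> y+s = x+t+v \<or> y+s+v = x+t}"
    by (simp only: orb_size_filter) (rule pair_count[OF bb_subv[OF p] x y])
  also have "card {(s,t)\<in>bb p \<times> bb p. y+s = x+t \<or> y+s = x+t+v \<or> y+s+v = x+t}
     = card {(s,t)\<in>bb p \<times> bb p. dl x y + s = t \<or> dl x y + s = t + v}"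
  proof -
    have "\<And>s t. s \<in> bb p \<Longrightarrow> t \<in> bb p \<Longrightarrow> (y+s = x+t \<or> y+s = x+t+v \<or> y+s+v = x+t) \<longleftrightarrow>
           (dl x y + s = t \<or> dl x y + s = t + v)"
      unfolding dl_def using bb_subv[OF p] x y by (intro delta_lemma) auto
    then have "{(s,t)\<in>bb p \<times> bb p. y+s = x+t \<or> y+s = x+t+v \<or> y+s+v = x+t}
     = {(s,t)\<in>bb p \<times> bb p. dl x y + s = t \<or> dl x y + s = t + v}" by blast
    then show ?thesis by simp
  qed
  also have "\<dots> = gd v (dl x y) ?e + gd v (dl x y) ?f + gd v (dl x y) (?e + ?f)"
    unfolding bb_eq
    by (rule tri_card[OF ef_props(1-4)[OF p] M3]) (use x y xy in \<open>auto simp: dl_def\<close>)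
  finally show ?thesis using ef_props(5)[OF p]
    by (cases p) (auto simp: ee_def ff_def)
qed

end


lemma sum_list_map_concat: "sum_list (map g (concat xss)) = sum_list (map (\<lambda>xs. sum_list (map g xs)) xss)"
  by (induct xss) auto

context fam
begin

lemma small_mod: "x \<le> 3*n \<Longrightarrow> c \<le> 3*n \<Longrightarrow> (x + c) mod v = x + c"
  using vdef by simp

lemma bb_T: "bb (k, True) = {0, a k, a k + b k}" by (simp add: bb_def)
lemma bb_F: "bb (k, False) = {0, b k, a k + b k}" by (simp add: bb_def add.commute)

lemma diff_transport:
  assumes S: "S \<subseteq> {0..3*n}" and q: "T = shift_block v d S" and x: "x \<in> S" "(x + c) mod v \<in> S"
  shows "\<exists>y\<in>T. (y + c) mod v \<in> T"
proof
  show "(x + d) mod v \<in> T" using x q by (auto simp: shift_mem)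
  show "((x + d) mod v + c) mod v \<in> T" using x q transport_mem[where x=x and d=c and S=S and k=d and v=v] by simp
qed

lemma orb_inj_diff:
  assumes p: "p \<in> PP" and q: "q \<in> PP" and ne: "fst p \<noteq> fst q"
    and e: "bb q = shift_block v d (bb p)"
  shows False
proof -
  obtain k ob where pk: "p = (k, ob)" by (cases p)
  obtain l ob' where ql: "q = (l, ob')" by (cases q)
  have k: "k < n" and l: "l < n" using p q pk ql by (auto simp: PP_def)
  let ?c = "a k + b k"
  have cin: "?c \<in> bb p" using pk by (cases ob) (auto simp: bb_def)
  have c3: "?c \<le> 3*n" using tri_props[OF k] by simp
  have "(0 + ?c) mod v \<in> bb p" using cin small_mod[of 0 ?c] c3 by simp
  then obtain y where y: "y \<in> bb q" "(y + ?c) mod v \<in> bb q"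
    using diff_transport[OF bb_sub[OF p] e bb0] by blast
  have y3: "y \<le> 3*n" using y bb_sub[OF q] by auto
  then have "y + ?c \<in> bb q" using y small_mod[OF y3 c3] by simp
  then have "?c \<in> {a l, b l, a l + b l}"
    using y tri_props[OF k] tri_props[OF l] ql by (cases ob') (auto simp: bb_def)
  moreover have "?c \<in> {a k, b k, a k + b k}" by simp
  ultimately show False using tri_disj[OF k l] ne pk ql by auto
qed

lemma orb_inj_same:
  assumes k: "k < n" and e: "bb (k, False) = shift_block v d (bb (k, True))"
  shows False
proof -
  let ?A = "a k" and ?B = "b k" and ?C = "a k + b k"
  have t: "1 \<le> ?A" "1 \<le> ?B" "?A \<noteq> ?B" "?C \<le> 3*n" using tri_props[OF k] by auto
  have m1: "((d mod v) + ?A) mod v \<in> bb (k, False)"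
    using e transport_mem[where x=0 and d="?A" and S="bb (k,True)" and k=d and v=v] small_mod[of 0 ?A] t by (simp add: bb_T)
  have m2: "((d mod v) + ?C) mod v \<in> bb (k, False)"
    using e transport_mem[where x=0 and d="?C" and S="bb (k,True)" and k=d and v=v] small_mod[of 0 ?C] t by (simp add: bb_T)
  have m0: "d mod v \<in> bb (k, False)" using e by (auto simp: shift_mem bb_T)
  define y where "y = d mod v"
  have y3: "y \<le> 3*n" using m0 bb_sub[of "(k,False)"] k unfolding y_def by (auto simp: PP_def)
  have "y + ?A \<in> {0, ?B, ?C}" "y + ?C \<in> {0, ?B, ?C}" "y \<in> {0, ?B, ?C}"
    using m0 m1 m2 small_mod[OF y3, of ?A] small_mod[OF y3, of ?C] t unfolding y_def[symmetric]
    by (auto simp: bb_F)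
  then show False using t by auto
qed

lemma orb_inj:
  assumes p: "p \<in> PP" and q: "q \<in> PP" and e: "block_orbit v (bb p) = block_orbit v (bb q)"
  shows "p = q"
proof (rule ccontr)
  assume ne: "p \<noteq> q"
  obtain d where d: "bb q = shift_block v d (bb p)" using orbit_eq_imp[OF bb_subv[OF q] e vpos] by blast
  obtain d' where d': "bb p = shift_block v d' (bb q)" using orbit_eq_imp[OF bb_subv[OF p] e[symmetric] vpos] by blast
  show False
  proof (cases "fst p = fst q")
    case False
    then show False using orb_inj_diff[OF p q False d] by simp
  next
    case True
    obtain k ob where pk: "p = (k, ob)" by (cases p)
    obtain ob' where qk: "q = (k, ob')" using True pk by (cases q) auto
    have k: "k < n" using p pk by (auto simp: PP_def)
    have "ob \<noteq> ob'" using ne pk qk by simp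
    then consider "ob = True" "ob' = False" | "ob = False" "ob' = True" by auto
    then show False
    proof cases
      case 1 then show False using orb_inj_same[OF k, of d] d pk qk by simp
    next
      case 2 then show False using orb_inj_same[OF k, of d'] d' pk qk by simp
    qed
  qed
qed

end


context fam
begin

definition mm :: "nat \<Rightarrow> nat \<Rightarrow> nat \<Rightarrow> nat" where
  "mm i j k = (if k < j then 4 else if k < i then 3 else 2)"

definition mu :: "nat \<Rightarrow> nat \<Rightarrow> nat \<times> bool \<Rightarrow> nat" where
  "mu i j p = (case p of (k, ob) \<Rightarrow> if ob then mm i j k else 4 - mm i j k)"

definition BB :: "nat \<Rightarrow> nat \<Rightarrow> nat set multiset" where
  "BB i j = (\<Sum>p\<in>PP. repeat_mset (mu i j p) (orb v (bb p)))"

lemma count_BB: "count (BB i j) z = (\<Sum>p\<in>PP. mu i j p * (if z \<in> block_orbit v (bb p) then 1 else 0))"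
  unfolding BB_def count_sum by (rule sum.cong) (auto simp: orb_count_bb)

lemma count_BB_in:
  assumes p0: "p0 \<in> PP" and z: "z \<in> block_orbit v (bb p0)"
  shows "count (BB i j) z = mu i j p0"
proof -
  obtain k where k: "k < v" and kz: "z = shift_block v k (bb p0)"
    using z unfolding block_orbit_def by blast
  have oz: "block_orbit v z = block_orbit v (bb p0)"
    unfolding kz by (rule orbit_shift[OF bb_subv[OF p0] k])
  have iff: "(z \<in> block_orbit v (bb p)) = (p = p0)" if p: "p \<in> PP" for p
  proof -
    have "p = p0" if zp: "z \<in> block_orbit v (bb p)"
    proof -
      obtain k' where k': "k' < v" and kz': "z = shift_block v k' (bb p)"
        using zp unfolding block_orbit_def by blast
      have "block_orbit v z = block_orbit v (bb p)"
        unfolding kz' by (rule orbit_shift[OF bb_subv[OF p] k'])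
      then have "block_orbit v (bb p) = block_orbit v (bb p0)" using oz by (rule trans[OF sym])
      then show "p = p0" by (rule orb_inj[OF p p0])
    qed
    then show ?thesis using z by blast
  qed
  have "count (BB i j) z = (\<Sum>p\<in>PP. if p = p0 then mu i j p else 0)"
    unfolding count_BB by (rule sum.cong) (simp_all add: iff)
  also have "\<dots> = mu i j p0" using p0 finPP by simp
  finally show ?thesis .
qed

lemma count_BB_out:
  assumes "\<forall>p\<in>PP. z \<notin> block_orbit v (bb p)"
  shows "count (BB i j) z = 0"
  unfolding count_BB using assms by simp

lemma mem_BB: "z \<in># BB i j \<Longrightarrow> \<exists>p\<in>PP. z \<in> block_orbit v (bb p) \<and> count (BB i j) z = mu i j p"
proof -
  assume z: "z \<in># BB i j"
  show ?thesis
  proof (rule ccontr)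
    assume "\<not> ?thesis"
    then have "\<forall>p\<in>PP. z \<notin> block_orbit v (bb p)" using count_BB_in[of _ z i j] by blast
    then have "count (BB i j) z = 0" by (rule count_BB_out)
    then show False using z by (simp add: count_eq_zero_iff)
  qed
qed

lemma bb_in_orbit: "p \<in> PP \<Longrightarrow> bb p \<in> block_orbit v (bb p)"
proof -
  assume p: "p \<in> PP"
  have e: "bb p = shift_block v 0 (bb p)" using shift0[OF bb_subv[OF p]] by simp
  show ?thesis unfolding block_orbit_def using vpos e by blast
qed

lemma mm_range: "mm i j k \<in> {2,3,4}" by (simp add: mm_def)

lemma sum_gd:
  assumes t: "1 \<le> t" "t < v"
  shows "(\<Sum>d\<in>{1..3*n}. gd v t d) = 1"
proof -
  have "(\<Sum>d\<in>{1..3*n}. gd v t d) = (\<Sum>d\<in>{1..3*n}. if t = d then 1 else 0) + (\<Sum>d\<in>{1..3*n}. if v - t = d then 1 else 0)"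
    unfolding gd_def sum.distrib[symmetric] by (rule sum.cong) (use t in auto)
  also have "\<dots> = (if t \<in> {1..3*n} then 1 else 0) + (if v - t \<in> {1..3*n} then 1 else 0)"
    by simp
  also have "\<dots> = 1" using t vdef by auto
  finally show ?thesis .
qed

lemma dl_range: "x < v \<Longrightarrow> y < v \<Longrightarrow> x \<noteq> y \<Longrightarrow> 1 \<le> dl x y \<and> dl x y < v"
  by (auto simp: dl_def)

lemma pair_BB:
  assumes x: "x < v" and y: "y < v" and xy: "x \<noteq> y" and ij: "j \<le> i"
  shows "size (filter_mset (\<lambda>z. {x,y} \<subseteq> z) (BB i j)) = 4"
proof -
  let ?t = "dl x y"
  define G where "G k = gd v ?t (a k) + gd v ?t (b k) + gd v ?t (a k + b k)" for k
  have "(\<Sum>k\<in>{0..<n}. G k) = sum_list (map (gd v ?t) (concat (map (\<lambda>k. [a k, b k, a k + b k]) [0..<n])))"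
    unfolding sum_list_map_concat G_def by (simp add: sum_set_upt_conv_sum_list_nat[symmetric] o_def add.assoc)
  also have "\<dots> = (\<Sum>d\<in>{1..3*n}. gd v ?t d)"
    using sum_list_distinct_conv_sum_set[OF dW, of "gd v ?t"] sW by simp
  also have "\<dots> = 1" using sum_gd dl_range[OF x y xy] by simp
  finally have hG: "(\<Sum>k\<in>{0..<n}. G k) = 1" .
  have "size (filter_mset (\<lambda>z. {x,y} \<subseteq> z) (BB i j)) = (\<Sum>p\<in>PP. mu i j p * G (fst p))"
    unfolding BB_def size_filter_sum size_filter_repeat
    by (rule sum.cong) (simp_all add: orb_pairs_bb[OF _ x y xy] G_def)
  also have "\<dots> = (\<Sum>k\<in>{0..<n}. \<Sum>ob\<in>UNIV. mu i j (k,ob) * G k)"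
    unfolding PP_def sum.cartesian_product by (rule sum.cong) auto
  also have "\<dots> = (\<Sum>k\<in>{0..<n}. 4 * G k)"
  proof (rule sum.cong)
    fix k
    have "mm i j k \<le> 4" using mm_range[of i j k] by auto
    then show "(\<Sum>ob\<in>UNIV. mu i j (k,ob) * G k) = 4 * G k"
      by (simp add: UNIV_bool mu_def algebra_simps)
  qed simp
  also have "\<dots> = 4 * (\<Sum>k\<in>{0..<n}. G k)" by (simp add: sum_distrib_left)
  also have "(\<Sum>k\<in>{0..<n}. G k) = 1" using hG .
  finally show ?thesis by simp
qed

end


context fam
begin

lemma CTS_BB:
  assumes ij: "j \<le> i"
  shows "is_CTS v 4 (BB i j)"
  unfolding is_CTS_def
proof (intro conjI ballI impI)
  fix z assume z: "z \<in># BB i j"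
  then obtain p where p: "p \<in> PP" "z \<in> block_orbit v (bb p)" using mem_BB by blast
  then obtain k where k: "k < v" "z = shift_block v k (bb p)" by (auto simp: block_orbit_def)
  show "z \<subseteq> {0..<v}" using k shift_sub[OF vpos] by simp
  show "card z = 3" using k shift_card[OF bb_subv[OF p(1)]] bb_card[OF p(1)] by simp
next
  show "image_mset (shift_block v 1) (BB i j) = BB i j"
    unfolding BB_def image_mset_sum' image_mset_repeat
  proof (rule sum.cong)
    fix p assume p: "p \<in> PP"
    show "repeat_mset (mu i j p) (image_mset (shift_block v 1) (orb v (bb p))) = repeat_mset (mu i j p) (orb v (bb p))"
      by (simp only: orb_inv[OF bb_subv[OF p] vpos])
  qed simp
next
  fix x y assume "x \<in> {0..<v}" "y \<in> {0..<v}" "x \<noteq> y"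
  then show "size (filter_mset (\<lambda>b. {x, y} \<subseteq> b) (BB i j)) = 4"
    using pair_BB[OF _ _ _ ij] by simp
qed

lemma fine_BB:
  assumes r: "0 < r"
  shows "fine_c v (BB i j) r = card {p\<in>PP. mu i j p = r}"
proof -
  have "{block_orbit v z | z. z \<in># BB i j \<and> count (BB i j) z = r}
      = (\<lambda>p. block_orbit v (bb p)) ` {p\<in>PP. mu i j p = r}"
  proof
    show "{block_orbit v z | z. z \<in># BB i j \<and> count (BB i j) z = r}
      \<subseteq> (\<lambda>p. block_orbit v (bb p)) ` {p\<in>PP. mu i j p = r}"
    proof
      fix Ob assume "Ob \<in> {block_orbit v z | z. z \<in># BB i j \<and> count (BB i j) z = r}"
      then obtain z where z: "z \<in># BB i j" "count (BB i j) z = r" "Ob = block_orbit v z" by blast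
      then obtain p where p: "p \<in> PP" "z \<in> block_orbit v (bb p)" "count (BB i j) z = mu i j p"
        using mem_BB by blast
      then obtain k where k: "k < v" "z = shift_block v k (bb p)" by (auto simp: block_orbit_def)
      have "Ob = block_orbit v (bb p)" using z(3) k orbit_shift[OF bb_subv[OF p(1)] k(1)] by simp
      then show "Ob \<in> (\<lambda>p. block_orbit v (bb p)) ` {p\<in>PP. mu i j p = r}" using p z by auto
    qed
    show "(\<lambda>p. block_orbit v (bb p)) ` {p\<in>PP. mu i j p = r}
       \<subseteq> {block_orbit v z | z. z \<in># BB i j \<and> count (BB i j) z = r}"
    proof
      fix Ob assume "Ob \<in> (\<lambda>p. block_orbit v (bb p)) ` {p\<in>PP. mu i j p = r}"
      then obtain p where p: "p \<in> PP" "mu i j p = r" "Ob = block_orbit v (bb p)" by blast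
      have c: "count (BB i j) (bb p) = r" using count_BB_in[OF p(1) bb_in_orbit[OF p(1)]] p by simp
      then have "bb p \<in># BB i j" using r by (simp add: count_greater_zero_iff[symmetric])
      then show "Ob \<in> {block_orbit v z | z. z \<in># BB i j \<and> count (BB i j) z = r}" using c p by blast
    qed
  qed
  moreover have "inj_on (\<lambda>p. block_orbit v (bb p)) {p\<in>PP. mu i j p = r}"
  proof (rule inj_onI)
    fix p q assume "p \<in> {p\<in>PP. mu i j p = r}" "q \<in> {p\<in>PP. mu i j p = r}"
      and "block_orbit v (bb p) = block_orbit v (bb q)"
    then show "p = q" using orb_inj[of p q] by blast
  qed
  ultimately show ?thesis unfolding fine_c_def by (simp add: card_image)
qed

lemma sets4: "j \<le> i \<Longrightarrow> i \<le> n \<Longrightarrow> {p\<in>PP. mu i j p = 4} = {0..<j} \<times> {True}"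
  by (auto simp: PP_def mu_def mm_def split: if_splits)

lemma sets3: "j \<le> i \<Longrightarrow> i \<le> n \<Longrightarrow> {p\<in>PP. mu i j p = 3} = {j..<i} \<times> {True}"
  by (auto simp: PP_def mu_def mm_def split: if_splits)

lemma sets2: "j \<le> i \<Longrightarrow> i \<le> n \<Longrightarrow> {p\<in>PP. mu i j p = 2} = {i..<n} \<times> UNIV"
  by (auto simp: PP_def mu_def mm_def split: if_splits)

lemma final:
  assumes "j \<le> i" "i \<le> n"
  shows "\<exists>B. is_CTS v 4 B \<and> fine_c v B 2 = 2 * n - 2 * i \<and> fine_c v B 3 = i - j \<and> fine_c v B 4 = j"
proof (intro exI conjI)
  show "is_CTS v 4 (BB i j)" using CTS_BB assms by simp
  show "fine_c v (BB i j) 2 = 2 * n - 2 * i"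
    using fine_BB[of 2 i j] sets2[OF assms] by (simp add: card_cartesian_product)
  show "fine_c v (BB i j) 3 = i - j"
    using fine_BB[of 3 i j] sets3[OF assms] by (simp add: card_cartesian_product)
  show "fine_c v (BB i j) 4 = j"
    using fine_BB[of 4 i j] sets4[OF assms] by (simp add: card_cartesian_product)
qed

end


definition VV :: "nat \<Rightarrow> (nat \<times> nat) list \<Rightarrow> nat list" where
  "VV n L = concat (map (\<lambda>(d,p). [d, p+n, d+(p+n)]) L)"

lemma fam_mem: "(d,p) \<in> set L \<Longrightarrow> y = d \<or> y = p+n \<or> y = d+(p+n) \<Longrightarrow> y \<in> set (VV n L)"
  unfolding VV_def by force

lemma mem_map_upt: "1 \<le> r \<Longrightarrow> r < m \<Longrightarrow> f r \<in> set (map f [1..<m])"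
  by simp

definition L0 :: "nat \<Rightarrow> (nat \<times> nat) list" where
  "L0 s = map (\<lambda>r. (4*s+2-2*r, 4*s+r-1)) [1..<2*s+1] @ (map (\<lambda>r. (4*s-2*r-1, r)) [1..<s]
     @ (map (\<lambda>r. (2*s-2*r-1, s+r+1)) [1..<s-1] @ [(1,s),(2*s-1,2*s),(4*s-1,2*s+1)]))"

lemma L0_cover:
  assumes s: "2 \<le> s" and x: "1 \<le> x" "x \<le> 12*s"
  shows "x \<in> set (VV (4*s) (L0 s))"
proof -
  let ?V = "set (VV (4*s) (L0 s))"
  have F1: "y \<in> ?V" if "1 \<le> r" "r \<le> 2*s" "y = 4*s+2-2*r \<or> y = 4*s+r-1+4*s \<or> y = 4*s+2-2*r+(4*s+r-1+4*s)" for r y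
  proof (rule fam_mem[OF _ that(3)])
    have "(4*s+2-2*r, 4*s+r-1) \<in> set (map (\<lambda>r. (4*s+2-2*r, 4*s+r-1)) [1..<2*s+1])"
      by (rule mem_map_upt[where f="\<lambda>r. (4*s+2-2*r, 4*s+r-1)"]) (use that in auto)
    then show "(4*s+2-2*r, 4*s+r-1) \<in> set (L0 s)" unfolding L0_def set_append by (rule UnI1)
  qed
  have F2: "y \<in> ?V" if "1 \<le> r" "r < s" "y = 4*s-2*r-1 \<or> y = r+4*s \<or> y = 4*s-2*r-1+(r+4*s)" for r y
  proof (rule fam_mem[OF _ that(3)])
    have "(4*s-2*r-1, r) \<in> set (map (\<lambda>r. (4*s-2*r-1, r)) [1..<s])"
      by (rule mem_map_upt[where f="\<lambda>r. (4*s-2*r-1, r)"]) (use that in auto)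
    then show "(4*s-2*r-1, r) \<in> set (L0 s)" unfolding L0_def set_append by (intro UnI2 UnI1)
  qed
  have F3: "y \<in> ?V" if "1 \<le> r" "r < s-1" "y = 2*s-2*r-1 \<or> y = s+r+1+4*s \<or> y = 2*s-2*r-1+(s+r+1+4*s)" for r y
  proof (rule fam_mem[OF _ that(3)])
    have "(2*s-2*r-1, s+r+1) \<in> set (map (\<lambda>r. (2*s-2*r-1, s+r+1)) [1..<s-1])"
      by (rule mem_map_upt[where f="\<lambda>r. (2*s-2*r-1, s+r+1)"]) (use that in auto)
    then show "(2*s-2*r-1, s+r+1) \<in> set (L0 s)" unfolding L0_def set_append by (intro UnI2 UnI1)
  qed
  have S: "y \<in> ?V" if "(d,p) \<in> {(1,s),(2*s-1,2*s),(4*s-1,2*s+1)}" "y = d \<or> y = p+4*s \<or> y = d+(p+4*s)" for d p y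
  proof (rule fam_mem[OF _ that(2)])
    show "(d,p) \<in> set (L0 s)" using that(1) unfolding L0_def set_append by auto
  qed
  have F1d: "y \<in> ?V" if "1 \<le> r" "r \<le> 2*s" "y = 4*s+2-2*r" for r y using F1 that by blast
  have F1p: "y \<in> ?V" if "1 \<le> r" "r \<le> 2*s" "y = 4*s+r-1+4*s" for r y using F1 that by blast
  have F1q: "y \<in> ?V" if "1 \<le> r" "r \<le> 2*s" "y = 4*s+2-2*r+(4*s+r-1+4*s)" for r y using F1 that by blast
  have F2d: "y \<in> ?V" if "1 \<le> r" "r < s" "y = 4*s-2*r-1" for r y using F2 that by blast
  have F2p: "y \<in> ?V" if "1 \<le> r" "r < s" "y = r+4*s" for r y using F2 that by blast
  have F2q: "y \<in> ?V" if "1 \<le> r" "r < s" "y = 4*s-2*r-1+(r+4*s)" for r y using F2 that by blast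
  have F3d: "y \<in> ?V" if "1 \<le> r" "r < s-1" "y = 2*s-2*r-1" for r y using F3 that by blast
  have F3p: "y \<in> ?V" if "1 \<le> r" "r < s-1" "y = s+r+1+4*s" for r y using F3 that by blast
  have F3q: "y \<in> ?V" if "1 \<le> r" "r < s-1" "y = 2*s-2*r-1+(s+r+1+4*s)" for r y using F3 that by blast
  have Sd: "y \<in> ?V" if "(d,p) \<in> {(1,s),(2*s-1,2*s),(4*s-1,2*s+1)}" "y = d" for d p y using S that by blast
  have Sp: "y \<in> ?V" if "(d,p) \<in> {(1,s),(2*s-1,2*s),(4*s-1,2*s+1)}" "y = p+4*s" for d p y using S that by blast
  have Sq: "y \<in> ?V" if "(d,p) \<in> {(1,s),(2*s-1,2*s),(4*s-1,2*s+1)}" "y = d+(p+4*s)" for d p y using S that by blast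
  show ?thesis
  proof (cases "x \<le> 4*s")
    case True
    show ?thesis
    proof (cases "even x")
      case True
      then obtain m where m: "x = 2*m" by (auto elim: evenE)
      show ?thesis by (rule F1d[of "2*s+1-m"]) (use \<open>x \<le> 4*s\<close> m x in arith)+
    next
      case False
      then obtain m where m: "x = 2*m+1" by (auto elim: oddE)
      have "x = 1 \<or> x = 2*s-1 \<or> x = 4*s-1 \<or> (3 \<le> x \<and> x \<le> 2*s-3) \<or> (2*s+1 \<le> x \<and> x \<le> 4*s-3)"
        using m \<open>x \<le> 4*s\<close> s by arith
      moreover have ?thesis if "x = 1" by (rule Sd[of 1 s]) (simp, use that s in arith)
      moreover have ?thesis if "x = 2*s-1" by (rule Sd[of "2*s-1" "2*s"]) (simp, use that s in arith)
      moreover have ?thesis if "x = 4*s-1" by (rule Sd[of "4*s-1" "2*s+1"]) (simp, use that s in arith)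
      moreover have ?thesis if c: "3 \<le> x" "x \<le> 2*s-3"
        by (rule F3d[of "s-1-m"]) (use c m s in arith)+
      moreover have ?thesis if d: "2*s+1 \<le> x" "x \<le> 4*s-3"
        by (rule F2d[of "2*s-1-m"]) (use d m s in arith)+
      ultimately show ?thesis by blast
    qed
  next
    case False
    have nx: "4*s+1 \<le> x" using False by simp
    have Pe: ?thesis if "4*s+1 \<le> x" "x \<le> 5*s-1" by (rule F2p[of "x-4*s"]) (use that s in arith)+
    have P5: ?thesis if "x = 5*s" by (rule Sp[of 1 s]) (simp, use that s in arith)
    have P51: ?thesis if "x = 5*s+1" by (rule Sq[of 1 s]) (simp, use that s in arith)
    have P6: ?thesis if "x = 6*s" by (rule Sp[of "2*s-1" "2*s"]) (simp, use that s in arith)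
    have P61: ?thesis if "x = 6*s+1" by (rule Sp[of "4*s-1" "2*s+1"]) (simp, use that s in arith)
    have P81: ?thesis if "x = 8*s-1" by (rule Sq[of "2*s-1" "2*s"]) (simp, use that s s in arith)
    have P10: ?thesis if "x = 10*s" by (rule Sq[of "4*s-1" "2*s+1"]) (simp, use that s s in arith)
    have Pg: ?thesis if "5*s+2 \<le> x" "x \<le> 6*s-1" by (rule F3p[of "x-5*s-1"]) (use that s in arith)+
    have Ph: ?thesis if "6*s+2 \<le> x" "x \<le> 7*s-1" by (rule F3q[of "7*s-x"]) (use that s in arith)+
    have Pi: ?thesis if "7*s \<le> x" "x \<le> 8*s-2" by (rule F2q[of "8*s-1-x"]) (use that s in arith)+
    have Pj: ?thesis if "8*s \<le> x" "x \<le> 10*s-1" by (rule F1p[of "x-8*s+1"]) (use that s in arith)+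
    have Pk: ?thesis if "10*s+1 \<le> x" "x \<le> 12*s" by (rule F1q[of "12*s+1-x"]) (use that s in arith)+
    show ?thesis
    proof (cases "x \<le> 5*s-1")
      case True show ?thesis by (rule Pe) (use True nx in arith)+
    next
      case c1: False
      show ?thesis
      proof (cases "x \<le> 5*s+1")
        case True then have "x = 5*s \<or> x = 5*s+1" using c1 s by arith
        then show ?thesis using P5 P51 by blast
      next
        case c2: False
        show ?thesis
        proof (cases "x \<le> 6*s-1")
          case True show ?thesis by (rule Pg) (use True c2 s in arith)+
        next
          case c3: False
          show ?thesis
          proof (cases "x \<le> 6*s+1")
            case True then have "x = 6*s \<or> x = 6*s+1" using c3 s by arith
            then show ?thesis using P6 P61 by blast
          next
            case c4: False
            show ?thesis
            proof (cases "x \<le> 7*s-1")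
              case True show ?thesis by (rule Ph) (use True c4 s in arith)+
            next
              case c5: False
              show ?thesis
              proof (cases "x \<le> 8*s-2")
                case True show ?thesis by (rule Pi) (use True c5 s in arith)+
              next
                case c6: False
                show ?thesis
                proof (cases "x \<le> 8*s-1")
                  case True then have "x = 8*s-1" using c6 s by arith
                  then show ?thesis using P81 by blast
                next
                  case c7: False
                  show ?thesis
                  proof (cases "x \<le> 10*s-1")
                    case True show ?thesis by (rule Pj) (use True c7 s in arith)+
                  next
                    case c8: False
                    show ?thesis
                    proof (cases "x = 10*s")
                      case True then show ?thesis using P10 by blast
                    next
                      case False show ?thesis by (rule Pk) (use False c8 x s in arith)+
                    qed
                  qed
                qed
              qed
            qed
          qed
        qed
      qed
    qed
  qed
qed



definition L1 :: "nat \<Rightarrow> (nat \<times> nat) list" where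
  "L1 s = map (\<lambda>r. (4*s+2-2*r, 4*s+r+1)) [1..<2*s+1] @ (map (\<lambda>r. (4*s+1-2*r, r)) [1..<s+1]
     @ (map (\<lambda>r. (2*s-2*r-1, s+r+2)) [1..<s-1] @ [(1,s+1),(4*s+1,2*s+1),(2*s-1,2*s+2)]))"

lemma L1_cover:
  assumes s: "2 \<le> s" and x: "1 \<le> x" "x \<le> 12*s+3"
  shows "x \<in> set (VV (4*s+1) (L1 s))"
proof -
  let ?V = "set (VV (4*s+1) (L1 s))"
  let ?n = "4*s+1"
  have F1: "y \<in> ?V" if "1 \<le> r" "r \<le> 2*s" "y = 4*s+2-2*r \<or> y = 4*s+r+1+?n \<or> y = 4*s+2-2*r+(4*s+r+1+?n)" for r y
  proof (rule fam_mem[OF _ that(3)])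
    have "(4*s+2-2*r, 4*s+r+1) \<in> set (map (\<lambda>r. (4*s+2-2*r, 4*s+r+1)) [1..<2*s+1])"
      by (rule mem_map_upt[where f="\<lambda>r. (4*s+2-2*r, 4*s+r+1)"]) (use that in auto)
    then show "(4*s+2-2*r, 4*s+r+1) \<in> set (L1 s)" unfolding L1_def set_append by (rule UnI1)
  qed
  have F2: "y \<in> ?V" if "1 \<le> r" "r \<le> s" "y = 4*s+1-2*r \<or> y = r+?n \<or> y = 4*s+1-2*r+(r+?n)" for r y
  proof (rule fam_mem[OF _ that(3)])
    have "(4*s+1-2*r, r) \<in> set (map (\<lambda>r. (4*s+1-2*r, r)) [1..<s+1])"
      by (rule mem_map_upt[where f="\<lambda>r. (4*s+1-2*r, r)"]) (use that in auto)
    then show "(4*s+1-2*r, r) \<in> set (L1 s)" unfolding L1_def set_append by (intro UnI2 UnI1)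
  qed
  have F3: "y \<in> ?V" if "1 \<le> r" "r < s-1" "y = 2*s-2*r-1 \<or> y = s+r+2+?n \<or> y = 2*s-2*r-1+(s+r+2+?n)" for r y
  proof (rule fam_mem[OF _ that(3)])
    have "(2*s-2*r-1, s+r+2) \<in> set (map (\<lambda>r. (2*s-2*r-1, s+r+2)) [1..<s-1])"
      by (rule mem_map_upt[where f="\<lambda>r. (2*s-2*r-1, s+r+2)"]) (use that in auto)
    then show "(2*s-2*r-1, s+r+2) \<in> set (L1 s)" unfolding L1_def set_append by (intro UnI2 UnI1)
  qed
  have S: "y \<in> ?V" if "(d,p) \<in> {(1,s+1),(4*s+1,2*s+1),(2*s-1,2*s+2)}" "y = d \<or> y = p+?n \<or> y = d+(p+?n)" for d p y
  proof (rule fam_mem[OF _ that(2)])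
    show "(d,p) \<in> set (L1 s)" using that(1) unfolding L1_def set_append by auto
  qed
  have F1d: "y \<in> ?V" if "1 \<le> r" "r \<le> 2*s" "y = 4*s+2-2*r" for r y using F1 that by blast
  have F1p: "y \<in> ?V" if "1 \<le> r" "r \<le> 2*s" "y = 4*s+r+1+?n" for r y using F1 that by blast
  have F1q: "y \<in> ?V" if "1 \<le> r" "r \<le> 2*s" "y = 4*s+2-2*r+(4*s+r+1+?n)" for r y using F1 that by blast
  have F2d: "y \<in> ?V" if "1 \<le> r" "r \<le> s" "y = 4*s+1-2*r" for r y using F2 that by blast
  have F2p: "y \<in> ?V" if "1 \<le> r" "r \<le> s" "y = r+?n" for r y using F2 that by blast
  have F2q: "y \<in> ?V" if "1 \<le> r" "r \<le> s" "y = 4*s+1-2*r+(r+?n)" for r y using F2 that by blast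
  have F3d: "y \<in> ?V" if "1 \<le> r" "r < s-1" "y = 2*s-2*r-1" for r y using F3 that by blast
  have F3p: "y \<in> ?V" if "1 \<le> r" "r < s-1" "y = s+r+2+?n" for r y using F3 that by blast
  have F3q: "y \<in> ?V" if "1 \<le> r" "r < s-1" "y = 2*s-2*r-1+(s+r+2+?n)" for r y using F3 that by blast
  have Sd: "y \<in> ?V" if "(d,p) \<in> {(1,s+1),(4*s+1,2*s+1),(2*s-1,2*s+2)}" "y = d" for d p y using S that by blast
  have Sp: "y \<in> ?V" if "(d,p) \<in> {(1,s+1),(4*s+1,2*s+1),(2*s-1,2*s+2)}" "y = p+?n" for d p y using S that by blast
  have Sq: "y \<in> ?V" if "(d,p) \<in> {(1,s+1),(4*s+1,2*s+1),(2*s-1,2*s+2)}" "y = d+(p+?n)" for d p y using S that by blast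
  show ?thesis
  proof (cases "x \<le> 4*s+1")
    case True
    show ?thesis
    proof (cases "even x")
      case True
      then obtain m where m: "x = 2*m" by (auto elim: evenE)
      show ?thesis by (rule F1d[of "2*s+1-m"]) (use \<open>x \<le> 4*s+1\<close> m x in arith)+
    next
      case False
      then obtain m where m: "x = 2*m+1" by (auto elim: oddE)
      have "x = 1 \<or> x = 2*s-1 \<or> x = 4*s+1 \<or> (3 \<le> x \<and> x \<le> 2*s-3) \<or> (2*s+1 \<le> x \<and> x \<le> 4*s-1)"
        using m \<open>x \<le> 4*s+1\<close> s by arith
      moreover have ?thesis if "x = 1" by (rule Sd[of 1 "s+1"]) (simp, use that s in arith)
      moreover have ?thesis if "x = 2*s-1" by (rule Sd[of "2*s-1" "2*s+2"]) (simp, use that s in arith)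
      moreover have ?thesis if "x = 4*s+1" by (rule Sd[of "4*s+1" "2*s+1"]) (simp, use that s in arith)
      moreover have ?thesis if c: "3 \<le> x" "x \<le> 2*s-3"
        by (rule F3d[of "s-1-m"]) (use c m s in arith)+
      moreover have ?thesis if d: "2*s+1 \<le> x" "x \<le> 4*s-1"
        by (rule F2d[of "2*s-m"]) (use d m s in arith)+
      ultimately show ?thesis by blast
    qed
  next
    case False
    have nx: "4*s+2 \<le> x" using False by simp
    have Pe: ?thesis if "4*s+2 \<le> x" "x \<le> 5*s+1" by (rule F2p[of "x-4*s-1"]) (use that s in arith)+
    have P5: ?thesis if "x = 5*s+2" by (rule Sp[of 1 "s+1"]) (simp, use that s in arith)
    have P51: ?thesis if "x = 5*s+3" by (rule Sq[of 1 "s+1"]) (simp, use that s in arith)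
    have P6: ?thesis if "x = 6*s+2" by (rule Sp[of "4*s+1" "2*s+1"]) (simp, use that s in arith)
    have P61: ?thesis if "x = 6*s+3" by (rule Sp[of "2*s-1" "2*s+2"]) (simp, use that s in arith)
    have P81: ?thesis if "x = 8*s+2" by (rule Sq[of "2*s-1" "2*s+2"]) (simp, use that s in arith)
    have P10: ?thesis if "x = 10*s+3" by (rule Sq[of "4*s+1" "2*s+1"]) (simp, use that s in arith)
    have Pg: ?thesis if "5*s+4 \<le> x" "x \<le> 6*s+1" by (rule F3p[of "x-5*s-3"]) (use that s in arith)+
    have Ph: ?thesis if "6*s+4 \<le> x" "x \<le> 7*s+1" by (rule F3q[of "7*s+2-x"]) (use that s in arith)+
    have Pi: ?thesis if "7*s+2 \<le> x" "x \<le> 8*s+1" by (rule F2q[of "8*s+2-x"]) (use that s in arith)+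
    have Pj: ?thesis if "8*s+3 \<le> x" "x \<le> 10*s+2" by (rule F1p[of "x-8*s-2"]) (use that s in arith)+
    have Pk: ?thesis if "10*s+4 \<le> x" "x \<le> 12*s+3" by (rule F1q[of "12*s+4-x"]) (use that s in arith)+
    show ?thesis
    proof (cases "x \<le> 5*s+1")
      case True show ?thesis by (rule Pe) (use True nx in arith)+
    next
      case c1: False
      show ?thesis
      proof (cases "x \<le> 5*s+3")
        case True then have "x = 5*s+2 \<or> x = 5*s+3" using c1 s by arith
        then show ?thesis using P5 P51 by blast
      next
        case c2: False
        show ?thesis
        proof (cases "x \<le> 6*s+1")
          case True show ?thesis by (rule Pg) (use True c2 s in arith)+
        next
          case c3: False
          show ?thesis
          proof (cases "x \<le> 6*s+3")
            case True then have "x = 6*s+2 \<or> x = 6*s+3" using c3 s by arith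
            then show ?thesis using P6 P61 by blast
          next
            case c4: False
            show ?thesis
            proof (cases "x \<le> 7*s+1")
              case True show ?thesis by (rule Ph) (use True c4 s in arith)+
            next
              case c5: False
              show ?thesis
              proof (cases "x \<le> 8*s+1")
                case True show ?thesis by (rule Pi) (use True c5 s in arith)+
              next
                case c6: False
                show ?thesis
                proof (cases "x \<le> 8*s+2")
                  case True then have "x = 8*s+2" using c6 s by arith
                  then show ?thesis using P81 by blast
                next
                  case c7: False
                  show ?thesis
                  proof (cases "x \<le> 10*s+2")
                    case True show ?thesis by (rule Pj) (use True c7 s in arith)+
                  next
                    case c8: False
                    show ?thesis
                    proof (cases "x = 10*s+3")
                      case True then show ?thesis using P10 by blast
                    next
                      case False show ?thesis by (rule Pk) (use False c8 x s in arith)+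
                    qed
                  qed
                qed
              qed
            qed
          qed
        qed
      qed
    qed
  qed
qed



lemma length_VV: "length (VV n L) = 3 * length L"
  by (induct L) (auto simp: VV_def)

lemma VV_good:
  assumes "length L = n" "set (VV n L) \<subseteq> {1..3*n}" "{1..3*n} \<subseteq> set (VV n L)"
  shows "distinct (VV n L) \<and> set (VV n L) = {1..3*n}"
proof -
  have e: "set (VV n L) = {1..3*n}" using assms by blast
  then have "card (set (VV n L)) = length (VV n L)" using assms(1) length_VV[of n L] by simp
  then show ?thesis using e card_distinct by blast
qed

lemma VV_bound:
  assumes "1 \<le> n" "\<forall>(d,p)\<in>set L. 1 \<le> d \<and> d + p \<le> 2*n"
  shows "set (VV n L) \<subseteq> {1..3*n}"
  using assms unfolding VV_def by fastforce

lemma L0_bound: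
  assumes s: "2 \<le> s"
  shows "\<forall>(d,p)\<in>set (L0 s). 1 \<le> d \<and> d + p \<le> 2*(4*s)"
proof -
  have 1: "\<forall>(d,p)\<in>set (map (\<lambda>r. (4*s+2-2*r, 4*s+r-1)) [1..<2*s+1]). 1 \<le> d \<and> d + p \<le> 2*(4*s)"
    by auto
  have 2: "\<forall>(d,p)\<in>set (map (\<lambda>r. (4*s-2*r-1, r)) [1..<s]). 1 \<le> d \<and> d + p \<le> 2*(4*s)"
    by auto
  have 3: "\<forall>(d,p)\<in>set (map (\<lambda>r. (2*s-2*r-1, s+r+1)) [1..<s-1]). 1 \<le> d \<and> d + p \<le> 2*(4*s)"
    by auto
  have 4: "\<forall>(d,p)\<in>set [(1,s),(2*s-1,2*s),(4*s-1,2*s+1)]. 1 \<le> d \<and> d + p \<le> 2*(4*s)"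
    using s by auto
  show ?thesis using 1 2 3 4 unfolding L0_def set_append ball_Un by blast
qed

lemma L1_bound:
  assumes s: "2 \<le> s"
  shows "\<forall>(d,p)\<in>set (L1 s). 1 \<le> d \<and> d + p \<le> 2*(4*s+1)"
proof -
  have 1: "\<forall>(d,p)\<in>set (map (\<lambda>r. (4*s+2-2*r, 4*s+r+1)) [1..<2*s+1]). 1 \<le> d \<and> d + p \<le> 2*(4*s+1)"
    by auto
  have 2: "\<forall>(d,p)\<in>set (map (\<lambda>r. (4*s+1-2*r, r)) [1..<s+1]). 1 \<le> d \<and> d + p \<le> 2*(4*s+1)"
    by auto
  have 3: "\<forall>(d,p)\<in>set (map (\<lambda>r. (2*s-2*r-1, s+r+2)) [1..<s-1]). 1 \<le> d \<and> d + p \<le> 2*(4*s+1)"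
    by auto
  have 4: "\<forall>(d,p)\<in>set [(1,s+1),(4*s+1,2*s+1),(2*s-1,2*s+2)]. 1 \<le> d \<and> d + p \<le> 2*(4*s+1)"
    using s by auto
  show ?thesis using 1 2 3 4 unfolding L1_def set_append ball_Un by blast
qed

lemma L0_len: "2 \<le> s \<Longrightarrow> length (L0 s) = 4*s"
  by (simp add: L0_def)

lemma L1_len: "2 \<le> s \<Longrightarrow> length (L1 s) = 4*s+1"
  by (simp add: L1_def)

lemma good_L:
  assumes n: "1 \<le> n" "n mod 4 = 0 \<or> n mod 4 = 1"
  shows "\<exists>L. length L = n \<and> distinct (VV n L) \<and> set (VV n L) = {1..3*n}"
proof -
  have cov: "\<exists>L. length L = n \<and> set (VV n L) \<subseteq> {1..3*n} \<and> {1..3*n} \<subseteq> set (VV n L)"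
  proof -
    have "n = 1 \<or> n = 4 \<or> n = 5 \<or> (\<exists>s. 2 \<le> s \<and> n = 4*s) \<or> (\<exists>s. 2 \<le> s \<and> n = 4*s+1)"
      using n by presburger
    then consider (a) "n = 1" | (b) "n = 4" | (c) "n = 5" | (d) s where "2 \<le> s" "n = 4*s"
       | (e) s where "2 \<le> s" "n = 4*s+1" by blast
    then show ?thesis
    proof cases
      case a
      have "set (VV 1 [(1,1)]) = {1..3*1}" by (simp add: VV_def atLeastAtMost_upt upt_rec insert_commute)
      then show ?thesis using a by (intro exI[of _ "[(1,1)]"]) simp
    next
      case b
      have "set (VV 4 [(1,1),(2,4),(3,5),(4,3)]) = {1..3*4}"
        by (simp add: VV_def atLeastAtMost_upt upt_rec numeral_eq_Suc insert_commute)
      then show ?thesis using b by (intro exI[of _ "[(1,1),(2,4),(3,5),(4,3)]"]) simp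
    next
      case c
      have "set (VV 5 [(1,8),(2,1),(3,4),(4,2),(5,5)]) = {1..3*5}" by code_simp
      then show ?thesis using c by (intro exI[of _ "[(1,8),(2,1),(3,4),(4,2),(5,5)]"]) simp
    next
      case (d s)
      show ?thesis
      proof (intro exI conjI)
        show "length (L0 s) = n" using d L0_len by simp
        show "set (VV n (L0 s)) \<subseteq> {1..3*n}" using d VV_bound[OF n(1)] L0_bound[OF d(1)] by simp
        show "{1..3*n} \<subseteq> set (VV n (L0 s))" using d L0_cover[OF d(1)] by auto
      qed
    next
      case (e s)
      show ?thesis
      proof (intro exI conjI)
        show "length (L1 s) = n" using e L1_len by simp
        show "set (VV n (L1 s)) \<subseteq> {1..3*n}" using e VV_bound[OF n(1)] L1_bound[OF e(1)] by simp
        show "{1..3*n} \<subseteq> set (VV n (L1 s))" using e L1_cover[OF e(1)] by auto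
      qed
    qed
  qed
  then show ?thesis using VV_good by blast
qed



lemma fam_exists:
  assumes n: "1 \<le> n" "n mod 4 = 0 \<or> n mod 4 = 1"
  shows "\<exists>a b. fam n (6*n+1) a b"
proof -
  obtain L where L: "length L = n" "distinct (VV n L)" "set (VV n L) = {1..3*n}"
    using good_L[OF n] by blast
  define a where "a k = fst (L!k)" for k
  define b where "b k = snd (L!k) + n" for k
  have m: "map (\<lambda>(d,p). [d, p+n, d+(p+n)]) L = map (\<lambda>k. [a k, b k, a k + b k]) [0..<n]"
    by (rule nth_equalityI) (auto simp: a_def b_def case_prod_beta L(1))
  have W: "concat (map (\<lambda>k. [a k, b k, a k + b k]) [0..<n]) = VV n L"
    unfolding VV_def m ..
  have "fam n (6*n+1) a b"
    by unfold_locales (use n L W in auto)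
  then show ?thesis by blast
qed

theorem mainTheorem13:
  fixes v n i j :: nat
  assumes "v mod 24 = 1 \<or> v mod 24 = 7"
    and "v \<ge> 7"
    and "n = (v - 1) div 6"
    and "j \<le> n" and "j \<le> i" and "i \<le> n"
  shows "\<exists>B. is_CTS v 4 B \<and>
           fine_c v B 2 = 2 * n - 2 * i \<and>
           fine_c v B 3 = i - j \<and>
           fine_c v B 4 = j"
proof -
  have h: "v = 6*n+1 \<and> 1 \<le> n \<and> (n mod 4 = 0 \<or> n mod 4 = 1)"
  proof -
    define t where "t = v div 24"
    have vt: "v = 24*t + v mod 24" unfolding t_def by simp
    show ?thesis using assms(1)
    proof
      assume r: "v mod 24 = 1"
      then have "v - 1 = 6*(4*t)" using vt by simp
      then have nt: "n = 4*t" using assms(3) by simp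
      have "t \<noteq> 0" using vt r assms(2) by auto
      then show ?thesis using nt vt r by simp
    next
      assume r: "v mod 24 = 7"
      then have "v - 1 = 6*(4*t+1)" using vt by simp
      then have nt: "n = 4*t+1" using assms(3) by simp
      then show ?thesis using vt r by simp
    qed
  qed
  have "\<exists>a b. fam n (6*n+1) a b" by (rule fam_exists) (use h in auto)
  then obtain a b where "fam n (6*n+1) a b" by blast
  then have "fam n v a b" using h by simp
  then show ?thesis using fam.final assms(5,6) by blast
qed


end
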